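(* Let $d\ge2$ be an integer, $a\in\mathbb C$, and $p(t)=a\Bigl((d-1)-\sum_{i=1}^d2t^i\Bigr)$. Suppose $a(d+1)$ is a root of unity and let $k$ be the smallest positive integer with $(a(d+1))^k=1$. Then $V_p$ has order $\operatorname{lcm}(k,d+1)$ if $d$ is odd, and $\operatorname{lcm}(k,2(d+1))$ if $d$ is even.
   Context: For $p(t)=a_0+a_1t+\cdots+a_dt^d$, $V_p$ is the $(d+1)\times(d+1)$ matrix whose $(i,j)$ entry ($0\le i,j\le d$) is $a_{(i-j-1)\bmod (d+1)}$. The order of an invertible matrix $M$ is the smallest $m\ge1$ with $M^m=I$. *)

theory Defs
  imports "Jordan_Normal_Form.Matrix" "HOL-Computational_Algebra.Polynomial"
begin

definition Vmat :: "nat \<Rightarrow> complex poly \<Rightarrow> complex mat" where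
  "Vmat d p = mat (d+1) (d+1)
     (\<lambda>(i,j). coeff p (nat ((int i - int j - 1) mod int (d+1))))"

definition has_order :: "complex mat \<Rightarrow> nat \<Rightarrow> bool" where
  "has_order M m \<longleftrightarrow> m \<ge> 1 \<and> M ^\<^sub>m m = 1\<^sub>m (dim_row M) \<and>
     (\<forall>j. 1 \<le> j \<and> j < m \<longrightarrow> M ^\<^sub>m j \<noteq> 1\<^sub>m (dim_row M))"

end

theory Submission imports Defs begin

definition dl :: "nat \<Rightarrow> int \<Rightarrow> complex" where
  "dl n x = (if x mod int n = 0 then 1 else 0)"

lemma sum_dl:
  fixes n :: nat assumes "n > 0"
  shows "(\<Sum>l<n. dl n (int l - r) * f l) = f (nat (r mod int n))"
proof -
  have "\<And>l. l < n \<Longrightarrow> ((int l - r) mod int n = 0) = (l = nat (r mod int n))"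
  proof -
    fix l assume l: "l < n"
    have "((int l - r) mod int n = 0) = (int l mod int n = r mod int n)"
      by (simp add: mod_eq_dvd_iff dvd_eq_mod_eq_0[symmetric])
    also have "int l mod int n = int l" using l by simp
    also have "(int l = r mod int n) = (l = nat (r mod int n))" using assms by auto
    finally show "?thesis l" .
  qed
  hence "(\<Sum>l<n. dl n (int l - r) * f l) = (\<Sum>l<n. if l = nat (r mod int n) then f l else 0)"
    by (intro sum.cong) (auto simp: dl_def)
  also have "\<dots> = f (nat (r mod int n))"
    using assms by (simp add: sum.delta' nat_less_iff)
  finally show ?thesis .
qed


lemma dl_neg: "dl n (- x) = dl n x"
  by (simp add: dl_def dvd_eq_mod_eq_0[symmetric])

lemma dl_mod: "dl n (x mod int n - y) = dl n (x - y)"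
  by (simp add: dl_def mod_diff_left_eq)

lemma key_sum:
  fixes n :: nat and i j m :: nat and A B :: complex
  assumes "n > 0"
  shows "(\<Sum>l<n. (dl n (int i - int l - int m) + A) * (dl n (int l - int j - 1) + B))
    = dl n (int i - int j - int (Suc m)) + A + B + of_nat n * A * B"
proof -
  have e1: "dl n (int i - int l - int m) = dl n (int l - (int i - int m))" for l
    using dl_neg[of n "int l - (int i - int m)"] by (simp add: algebra_simps)
  have e2: "dl n (int l - int j - 1) = dl n (int l - (int j + 1))" for l
    by (simp add: algebra_simps)
  have "(\<Sum>l<n. (dl n (int i - int l - int m) + A) * (dl n (int l - int j - 1) + B))
     = (\<Sum>l<n. dl n (int l - (int i - int m)) * dl n (int l - (int j + 1)))
       + (\<Sum>l<n. dl n (int l - (int i - int m)) * B)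
       + (\<Sum>l<n. dl n (int l - (int j + 1)) * A)
       + (\<Sum>l<n. A * B)"
    unfolding e1 e2 by (simp add: sum.distrib algebra_simps)
  also have "\<dots> = dl n (int (nat ((int i - int m) mod int n)) - (int j + 1)) + B + A + of_nat n * A * B"
    using assms by (simp add: sum_dl[OF assms])
  also have "dl n (int (nat ((int i - int m) mod int n)) - (int j + 1)) = dl n (int i - int j - int (Suc m))"
    using assms dl_mod[where x="int i - int m" and n=n and y="int j + 1"] by (simp add: algebra_simps)
  finally show ?thesis by (simp add: algebra_simps)
qed


definition W :: "nat \<Rightarrow> complex \<Rightarrow> nat \<Rightarrow> complex mat" where
  "W n c m = mat n n (\<lambda>(i,j). c^m * (dl n (int i - int j - int m) + ((-1)^m - 1) / of_nat n))"

lemma W_dims[simp]: "dim_row (W n c m) = n" "dim_col (W n c m) = n"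
  by (auto simp: W_def)

lemma W_0: "n > 0 \<Longrightarrow> W n c 0 = 1\<^sub>m n"
proof (rule eq_matI)
  fix i j assume "n > 0" "i < dim_row (1\<^sub>m n)" "j < dim_col (1\<^sub>m n)"
  hence ij: "i < n" "j < n" by auto
  have "((int i - int j) mod int n = 0) = (i = j)"
  proof
    assume "(int i - int j) mod int n = 0"
    hence "int i mod int n = int j mod int n" by (simp add: mod_eq_dvd_iff dvd_eq_mod_eq_0[symmetric])
    thus "i = j" using ij by simp
  qed simp
  thus "W n c 0 $$ (i, j) = 1\<^sub>m n $$ (i, j)" using ij by (simp add: W_def dl_def)
qed auto

lemma W_Suc:
  assumes "n > 0"
  shows "W n c m * W n c 1 = W n c (Suc m)"
proof (rule eq_matI)
  fix i j assume "i < dim_row (W n c (Suc m))" "j < dim_col (W n c (Suc m))"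
  hence ij: "i < n" "j < n" by auto
  define A :: complex where "A = ((-1)^m - 1) / of_nat n"
  define B :: complex where "B = ((-1)^1 - 1) / of_nat n"
  have "(W n c m * W n c 1) $$ (i,j) = (\<Sum>l<n. c^m * (dl n (int i - int l - int m) + A) * (c * (dl n (int l - int j - 1) + B)))"
    using ij by (simp add: W_def scalar_prod_def A_def B_def lessThan_atLeast0 mult.assoc)
  also have "\<dots> = c^(Suc m) * (\<Sum>l<n. (dl n (int i - int l - int m) + A) * (dl n (int l - int j - 1) + B))"
    by (simp add: sum_distrib_left algebra_simps)
  also have "\<dots> = c^(Suc m) * (dl n (int i - int j - int (Suc m)) + (A + B + of_nat n * A * B))"
    unfolding key_sum[OF assms, of i m A j B] by (simp add: algebra_simps)
  also have "A + B + of_nat n * A * B = ((-1)^(Suc m) - 1) / of_nat n"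
    using assms unfolding A_def B_def by (simp add: field_simps)
  finally show "(W n c m * W n c 1) $$ (i,j) = W n c (Suc m) $$ (i,j)"
    using ij by (simp add: W_def)
qed auto


lemma W_one_iff:
  assumes "n \<ge> 3" "c \<noteq> 0"
  shows "W n c m = 1\<^sub>m n \<longleftrightarrow> c^m = 1 \<and> n dvd m \<and> even m"
proof
  assume H: "W n c m = 1\<^sub>m n"
  have n0: "0 < n" "1 < n" using assms by auto
  have cm: "c^m \<noteq> 0" using assms by simp
  have e01: "W n c m $$ (0,1) = 0" using H n0 by simp
  have e00: "W n c m $$ (0,0) = 1" using H n0 by simp
  have ev: "even m"
  proof (rule ccontr)
    assume "odd m"
    hence "W n c m $$ (0,1) = c^m * (dl n (- 1 - int m) - 2 / of_nat n)"
      using n0 by (simp add: W_def)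
    with e01 cm have "dl n (- 1 - int m) = 2 / of_nat n" using assms(2) by auto
    moreover have "(2::complex) / of_nat n \<noteq> 0" "(2::complex) / of_nat n \<noteq> 1"
    proof -
      have "of_nat n \<noteq> (2::complex)" using assms
        by (metis of_nat_eq_iff of_nat_numeral numeral_le_iff semiring_norm(69) not_less_eq_eq numeral_2_eq_2 numeral_3_eq_3 le_antisym le_Suc_eq nat.distinct(1) Suc_n_not_le_n)
      thus "(2::complex) / of_nat n \<noteq> 0" "(2::complex) / of_nat n \<noteq> 1" using assms by (auto simp: field_simps)
    qed
    ultimately show False by (auto simp: dl_def split: if_splits)
  qed
  hence "W n c m $$ (0,0) = c^m * dl n (- int m)" using n0 by (simp add: W_def)
  with e00 have "c^m * dl n (- int m) = 1" by simp
  hence "c^m = 1 \<and> (- int m) mod int n = 0" by (auto simp: dl_def split: if_splits)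
  hence "c^m = 1 \<and> int n dvd int m" by (auto simp: dvd_eq_mod_eq_0[symmetric])
  thus "c^m = 1 \<and> n dvd m \<and> even m" using ev by simp
next
  assume H: "c^m = 1 \<and> n dvd m \<and> even m"
  have n0: "0 < n" using assms by auto
  have "W n c m = W n c 0"
  proof (rule eq_matI)
    fix i j assume "i < dim_row (W n c 0)" "j < dim_col (W n c 0)"
    have "dl n (int i - int j - int m) = dl n (int i - int j)"
    proof -
      from H obtain q where "m = n * q" by auto
      hence "(int i - int j - int m) mod int n = (int i - int j) mod int n"
        using mod_mult_self1[of "int i - int j" "- int q" "int n"] by (simp add: algebra_simps)
      thus ?thesis by (simp add: dl_def)
    qed
    thus "W n c m $$ (i,j) = W n c 0 $$ (i,j)" using H \<open>i < dim_row (W n c 0)\<close> \<open>j < dim_col (W n c 0)\<close>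
      by (simp add: W_def)
  qed auto
  thus "W n c m = 1\<^sub>m n" using W_0[OF n0] by simp
qed


lemma pow_W: "n > 0 \<Longrightarrow> W n c 1 ^\<^sub>m m = W n c m"
proof (induction m)
  case 0 thus ?case by (simp add: W_0)
next
  case (Suc m) thus ?case by (metis pow_mat.simps(2) W_Suc)
qed

lemma root_dvd:
  fixes c :: complex
  assumes "k \<ge> 1" "c^k = 1" "\<forall>j. 1 \<le> j \<and> j < k \<longrightarrow> c^j \<noteq> 1"
  shows "c^m = 1 \<longleftrightarrow> k dvd m"
proof
  assume h: "c^m = 1"
  have "m = k * (m div k) + m mod k" by simp
  hence "c^m = (c^k)^(m div k) * c^(m mod k)" by (metis power_add power_mult)
  hence "c^(m mod k) = 1" using h assms(2) by simp
  moreover have "m mod k < k" using assms(1) by simp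
  ultimately have "m mod k = 0" using assms(3) by (metis less_one not_less)
  thus "k dvd m" by auto
next
  assume "k dvd m" then obtain q where "m = k * q" by auto
  thus "c^m = 1" using assms(2) by (simp add: power_mult)
qed

lemma Vmat_W:
  fixes d :: nat and a :: complex and p :: "complex poly"
  assumes "d \<ge> 2"
    and "p = smult a ([:of_nat (d - 1):] - (\<Sum>i=1..d. monom 2 i))"
  shows "Vmat d p = W (d+1) (a * of_nat (d+1)) 1"
proof (rule eq_matI)
  fix i j assume "i < dim_row (W (d+1) (a * of_nat (d+1)) 1)" "j < dim_col (W (d+1) (a * of_nat (d+1)) 1)"
  hence ij: "i < d+1" "j < d+1" by auto
  define t where "t = nat ((int i - int j - 1) mod int (d+1))"
  have m1: "(int i - int j - 1) mod int (d+1) < int (d+1)" by simp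
  have m2: "0 \<le> (int i - int j - 1) mod int (d+1)" by simp
  have tle: "t \<le> d" unfolding t_def using m1 m2 by linarith
  have t0: "(t = 0) = ((int i - int j - 1) mod int (d+1) = 0)" unfolding t_def
    using m2 by linarith
  have cp: "coeff p t = a * ((if t = 0 then of_nat (d-1) else 0) - (if t \<in> {1..d} then 2 else 0))"
    using assms(2) by (simp add: coeff_sum coeff_monom coeff_pCons split: nat.split)
  have "Vmat d p $$ (i,j) = coeff p t" using ij by (simp add: Vmat_def t_def)
  also have "\<dots> = a * of_nat (d+1) * (dl (d+1) (int i - int j - 1) + ((-1)^1 - 1) / of_nat (d+1))"
  proof (cases "t = 0")
    case True
    hence dl1: "dl (d+1) (int i - int j - 1) = 1" using t0 by (simp add: dl_def)
    have "of_nat (d - 1) = (of_nat d - 1 :: complex)" using assms(1) by (simp add: of_nat_diff)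
    hence cpt: "coeff p t = a * (of_nat d - 1)" using cp True by simp
    have nz: "(of_nat (d+1) :: complex) \<noteq> 0" by (metis of_nat_eq_0_iff add_is_0 zero_neq_one)
    have "a * of_nat (d+1) * (1 + ((-1)^1 - 1) / of_nat (d+1)) = a * (of_nat (d+1) - 2)"
      using nz by (simp add: field_simps)
    also have "\<dots> = a * (of_nat d - 1)" by simp
    finally show ?thesis unfolding cpt dl1 by metis
  next
    case False
    hence "dl (d+1) (int i - int j - 1) = 0" using t0 by (simp add: dl_def)
    moreover have "coeff p t = - 2 * a" using cp False tle by simp
    moreover have "(1 + of_nat d :: complex) \<noteq> 0"
      by (metis of_nat_Suc of_nat_eq_0_iff nat.distinct(1) add.commute)
    ultimately show ?thesis by (simp add: field_simps)
  qed
  finally show "Vmat d p $$ (i,j) = W (d+1) (a * of_nat (d+1)) 1 $$ (i,j)"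
    using ij by (simp add: W_def)
qed (auto simp: Vmat_def)


theorem corollary17:
  fixes d k :: nat and a :: complex and p :: "complex poly"
  assumes "d \<ge> 2"
    and "p = smult a ([:of_nat (d - 1):] - (\<Sum>i=1..d. monom 2 i))"
    and "k \<ge> 1" and "(a * of_nat (d+1)) ^ k = 1"
    and "\<forall>j. 1 \<le> j \<and> j < k \<longrightarrow> (a * of_nat (d+1)) ^ j \<noteq> 1"
  shows "has_order (Vmat d p) (if odd d then lcm k (d+1) else lcm k (2*(d+1)))"
proof -
  define n where "n = d + 1"
  define c where "c = a * of_nat (d+1)"
  define L where "L = (if odd d then lcm k (d+1) else lcm k (2*(d+1)))"
  have n3: "n \<ge> 3" using assms(1) n_def by simp
  have c0: "c \<noteq> 0" using assms(3,4) c_def by (metis power_0_left not_one_le_zero zero_neq_one le_0_eq power_eq_0_iff)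
  have V: "Vmat d p = W n c 1" using Vmat_W[OF assms(1,2)] n_def c_def by simp
  have dimV: "dim_row (Vmat d p) = n" using V by simp
  have iff: "Vmat d p ^\<^sub>m m = 1\<^sub>m (dim_row (Vmat d p)) \<longleftrightarrow> k dvd m \<and> n dvd m \<and> even m" for m
  proof -
    have pw: "Vmat d p ^\<^sub>m m = W n c m" unfolding V using pow_W[of n c m] n3 by simp
    have r: "c^m = 1 \<longleftrightarrow> k dvd m" using root_dvd[OF assms(3), of c m] assms(4,5) unfolding c_def by simp
    show ?thesis unfolding pw dimV W_one_iff[OF n3 c0] r ..
  qed
  have good: "k dvd L \<and> n dvd L \<and> even L"
  proof (cases "odd d")
    case True thus ?thesis unfolding L_def n_def by (auto intro: dvd_trans[OF _ dvd_lcm2])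
  next
    case False
    have "2 * (d+1) dvd lcm k (2*(d+1))" by simp
    moreover have "L = lcm k (2*(d+1))" using False unfolding L_def by simp
    ultimately have "2 * n dvd L" unfolding n_def by simp
    hence "n dvd L \<and> 2 dvd L" using dvd_mult_left dvd_mult_right by blast
    thus ?thesis using False unfolding L_def by simp
  qed
  have least: "L dvd m" if "k dvd m" "n dvd m" "even m" for m
  proof (cases "odd d")
    case True thus ?thesis using that unfolding L_def n_def by (simp add: lcm_least)
  next
    case False
    hence "coprime 2 n" unfolding n_def by simp
    hence "2 * n dvd m" using that by (simp add: divides_mult)
    thus ?thesis using False that unfolding L_def n_def by (simp add: lcm_least)
  qed
  have L1: "L \<ge> 1" unfolding L_def using assms(3) by (simp add: lcm_pos_nat Suc_le_eq)
  show ?thesis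
    unfolding has_order_def L_def[symmetric]
  proof (intro conjI allI impI)
    show "1 \<le> L" by (rule L1)
    show "Vmat d p ^\<^sub>m L = 1\<^sub>m (dim_row (Vmat d p))" using iff good by blast
    fix j assume j: "1 \<le> j \<and> j < L"
    show "Vmat d p ^\<^sub>m j \<noteq> 1\<^sub>m (dim_row (Vmat d p))"
    proof
      assume "Vmat d p ^\<^sub>m j = 1\<^sub>m (dim_row (Vmat d p))"
      hence "L dvd j" using iff least by blast
      hence "L \<le> j" using j by (intro dvd_imp_le) auto
      thus False using j by simp
    qed
  qed
qed

end
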